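(* Let $1\le M\le N$, let $\mathbf{H}$ be a complex $N\times M$ matrix of full column rank, and let $\mathbf{H}^{-\mathtt{H}}=\mathbf{H}(\mathbf{H}^{\mathtt{H}}\mathbf{H})^{-1}$. Let $\mathbf{B}=[\mathbf{b}_1,\dots,\mathbf{b}_M]=\mathbf{H}^{-\mathtt{H}}\mathbf{U}$, with $\mathbf{U}$ an $M\times M$ unimodular matrix over $\mathbb{Z}[i]$, be an LLL-reduced basis of the lattice generated by $\mathbf{H}^{-\mathtt{H}}$, let $\delta$ be its orthogonality defect, and write $\mathbf{B}^{-\mathtt{H}}=\mathbf{B}(\mathbf{B}^{\mathtt{H}}\mathbf{B})^{-1}=[\mathbf{a}_1,\dots,\mathbf{a}_M]$. Suppose $\mathbf{y}=\mathbf{H}\mathbf{x}+\mathbf{w}$ with $\mathbf{x}\in\mathbb{Z}[i]^M$ and $\mathbf{w}\in\mathbb{C}^N$. If $$\|\mathbf{w}\|<\frac{\min\{\|\mathbf{a}_1\|,\dots,\|\mathbf{a}_M\|\}}{2\sqrt{M\delta}},$$ then the LLL-aided (type I) decoder correctly decodes, i.e. $\widehat{\mathbf{x}}=\mathbf{x}$.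
   Context: $(\cdot)^{\mathtt{H}}$ is the conjugate transpose; $\mathbb{Z}[i]$ is the ring of Gaussian integers; a unimodular matrix is a matrix with entries in $\mathbb{Z}[i]$ whose inverse also has entries in $\mathbb{Z}[i]$. The lattice generated by an $N\times M$ matrix $\mathbf{G}$ of full column rank is $\{\mathbf{G}\mathbf{z}:\mathbf{z}\in\mathbb{Z}[i]^M\}$. The orthogonality defect of $\mathbf{B}=[\mathbf{b}_1,\dots,\mathbf{b}_M]$ is $\delta=\|\mathbf{b}_1\|^2\cdots\|\mathbf{b}_M\|^2/\det(\mathbf{B}^{\mathtt{H}}\mathbf{B})$. A basis is LLL-reduced in the sense of the Lenstra–Lenstra–Lovász reduction (extended to complex lattices over $\mathbb{Z}[i]$): with Gram–Schmidt vectors $\mathbf{b}_k^*$ and coefficients $\mu_{k,j}=\langle\mathbf{b}_k,\mathbf{b}_j^*\rangle/\|\mathbf{b}_j^*\|^2$, one has $|\mathrm{Re}\,\mu_{k,j}|,|\mathrm{Im}\,\mu_{k,j}|\le 1/2$ for $j<k$ and $\|\mathbf{b}_k^*\|^2\ge(3/4-|\mu_{k,k-1}|^2)\|\mathbf{b}_{k-1}^*\|^2$. The LLL-aided (type I) decoder computes $\tilde{\mathbf{x}}$ as the closest point of $\mathbb{Z}[i]^M$ to $\mathbf{B}^{\mathtt{H}}\mathbf{y}$ (componentwise rounding of real and imaginary parts) and outputs $\widehat{\mathbf{x}}=\mathbf{U}^{-\mathtt{H}}\tilde{\mathbf{x}}$. *)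

theory Defs
  imports "Jordan_Normal_Form.DL_Rank" "Jordan_Normal_Form.Gram_Schmidt"
    "Jordan_Normal_Form.Schur_Decomposition"
begin

definition gauss_int :: "complex \<Rightarrow> bool" where
  "gauss_int z \<longleftrightarrow> Re z \<in> \<int> \<and> Im z \<in> \<int>"

definition gauss_vec :: "complex vec \<Rightarrow> bool" where
  "gauss_vec v \<longleftrightarrow> (\<forall>i < dim_vec v. gauss_int (v $ i))"

definition gauss_mat :: "complex mat \<Rightarrow> bool" where
  "gauss_mat A \<longleftrightarrow> (\<forall>i < dim_row A. \<forall>j < dim_col A. gauss_int (A $$ (i, j)))"

definition unimodular :: "nat \<Rightarrow> complex mat \<Rightarrow> bool" where
  "unimodular m U \<longleftrightarrow> U \<in> carrier_mat m m \<and> gauss_mat U \<and>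
     (\<exists>V \<in> carrier_mat m m. gauss_mat V \<and> inverts_mat U V \<and> inverts_mat V U)"

definition mat_inv :: "'a :: field mat \<Rightarrow> 'a mat" where
  "mat_inv A = (SOME B. B \<in> carrier_mat (dim_row A) (dim_row A) \<and> inverts_mat A B \<and> inverts_mat B A)"

(* A^{-H} = A (A^H A)^{-1}; mat_adjoint is the conjugate transpose *)
definition pinv_H :: "complex mat \<Rightarrow> complex mat" where
  "pinv_H A = A * mat_inv (mat_adjoint A * A)"

definition vnorm :: "complex vec \<Rightarrow> real" where
  "vnorm v = sqrt (\<Sum>i<dim_vec v. (cmod (v $ i))^2)"

(* Gram-Schmidt vectors b_k^* of the columns of B (not normalised) *)
definition gs :: "complex mat \<Rightarrow> nat \<Rightarrow> complex vec" where
  "gs B k = gram_schmidt (dim_row B) (cols B) ! k"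

(* mu_{k,j} = <b_k, b_j^*> / ||b_j^*||^2, with <u,v> = sum u_i conj(v_i) *)
definition gs_mu :: "complex mat \<Rightarrow> nat \<Rightarrow> nat \<Rightarrow> complex" where
  "gs_mu B k j = (col B k \<bullet>c gs B j) / of_real ((vnorm (gs B j))^2)"

(* complex LLL reduction (delta = 3/4), columns indexed 0..M-1 *)
definition lll_reduced :: "complex mat \<Rightarrow> bool" where
  "lll_reduced B \<longleftrightarrow>
     (\<forall>k < dim_col B. \<forall>j < k. \<bar>Re (gs_mu B k j)\<bar> \<le> 1/2 \<and> \<bar>Im (gs_mu B k j)\<bar> \<le> 1/2) \<and>
     (\<forall>k. 1 \<le> k \<and> k < dim_col B \<longrightarrow>
        (vnorm (gs B k))^2 \<ge> (3/4 - (cmod (gs_mu B k (k - 1)))^2) * (vnorm (gs B (k - 1)))^2)"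

(* orthogonality defect; det(B^H B) is a positive real for full column rank B *)
definition orth_defect :: "complex mat \<Rightarrow> real" where
  "orth_defect B = (\<Prod>k<dim_col B. (vnorm (col B k))^2) / Re (det (mat_adjoint B * B))"

definition round_gauss :: "complex \<Rightarrow> complex" where
  "round_gauss z = Complex (of_int (round (Re z))) (of_int (round (Im z)))"

definition round_vec :: "complex vec \<Rightarrow> complex vec" where
  "round_vec v = map_vec round_gauss v"

definition lll_decode :: "complex mat \<Rightarrow> complex mat \<Rightarrow> complex vec \<Rightarrow> complex vec" where
  "lll_decode B U y = mat_adjoint (mat_inv U) *\<^sub>v round_vec (mat_adjoint B *\<^sub>v y)"

end

theory Submission
  imports Defs "HOL-Analysis.L2_Norm"
begin

lemma adj_dims[simp]: "dim_row (mat_adjoint A) = dim_col A" "dim_col (mat_adjoint A) = dim_row A"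
  unfolding mat_adjoint_def by auto

lemma adj_index[simp]: "i < dim_col A \<Longrightarrow> j < dim_row A \<Longrightarrow> mat_adjoint A $$ (i,j) = cnj (A $$ (j,i))"
  unfolding mat_adjoint_def by (auto simp: mat_of_rows_def)

lemma adj_carrier[simp]: "A \<in> carrier_mat n m \<Longrightarrow> mat_adjoint A \<in> carrier_mat m n"
  by auto

lemma adj_adj[simp]: "mat_adjoint (mat_adjoint (A::complex mat)) = A"
  by (rule eq_matI) auto

lemma adj_one[simp]: "mat_adjoint (1\<^sub>m n :: complex mat) = 1\<^sub>m n"
  by (rule eq_matI) auto

lemma adj_mult: assumes "A \<in> carrier_mat n k" "B \<in> carrier_mat k m"
  shows "mat_adjoint (A * B :: complex mat) = mat_adjoint B * mat_adjoint A"
proof (rule eq_matI)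
  fix i j assume ij: "i < dim_row (mat_adjoint B * mat_adjoint A)" "j < dim_col (mat_adjoint B * mat_adjoint A)"
  then have i: "i < m" and j: "j < n" using assms by auto
  show "mat_adjoint (A * B) $$ (i, j) = (mat_adjoint B * mat_adjoint A) $$ (i, j)"
    using assms i j by (auto simp: scalar_prod_def cnj_sum mult.commute intro!: sum.cong)
qed (use assms in auto)

lemma mult_index_sum: "A \<in> carrier_mat n k \<Longrightarrow> B \<in> carrier_mat k m \<Longrightarrow> i < n \<Longrightarrow> j < m \<Longrightarrow>
  (A * B) $$ (i,j) = (\<Sum>l<k. A $$ (i,l) * B $$ (l,j))"
  by (auto simp: scalar_prod_def lessThan_atLeast0 intro!: sum.cong)

lemma gram_index: "C \<in> carrier_mat n m \<Longrightarrow> i < m \<Longrightarrow> j < m \<Longrightarrow>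
  (mat_adjoint C * C) $$ (i,j) = (\<Sum>l<n. cnj (C $$ (l,i)) * C $$ (l,j))"
  by (subst mult_index_sum[of _ m n]) auto

lemma row_adj_col: "C \<in> carrier_mat n m \<Longrightarrow> i < m \<Longrightarrow> j < m \<Longrightarrow>
  row (mat_adjoint C) i \<bullet> col C j = (\<Sum>l<n. cnj (C $$ (l,i)) * C $$ (l,j))"
  using gram_index[of C n m i j] by simp

lemma vnorm_sq: "(vnorm v)^2 = (\<Sum>i<dim_vec v. (cmod (v $ i))^2)"
  unfolding vnorm_def by (simp add: sum_nonneg)

lemma vnorm_nonneg: "vnorm v \<ge> 0" unfolding vnorm_def by (simp add: sum_nonneg)

lemma vnorm_col_sq: "C \<in> carrier_mat n m \<Longrightarrow> j < m \<Longrightarrow> (vnorm (col C j))^2 = (\<Sum>l<n. (cmod (C $$ (l,j)))^2)"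
  by (simp add: vnorm_sq)

lemma cnorm_sq: "cnj z * z = complex_of_real ((cmod z)^2)"
  by (simp only: complex_norm_square mult.commute)

lemma pythag:
  fixes x y :: "nat \<Rightarrow> complex"
  assumes "(\<Sum>l<n. cnj (y l) * x l) = 0"
  shows "(\<Sum>l<n. (cmod (x l - c * y l))^2) = (\<Sum>l<n. (cmod (x l))^2) + (cmod c)^2 * (\<Sum>l<n. (cmod (y l))^2)"
proof -
  have e: "complex_of_real ((cmod (x l - c * y l))^2) = cnj (x l) * x l - c * cnj (cnj (y l) * x l)
     - cnj c * (cnj (y l) * x l) + complex_of_real ((cmod c)^2) * (complex_of_real ((cmod (y l))^2))" for l
    by (simp only: complex_norm_square) (simp add: algebra_simps)
  have e2: "complex_of_real ((cmod (x l))^2) = cnj (x l) * x l" for l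
    by (simp only: complex_norm_square) (simp add: mult.commute)
  have "complex_of_real (\<Sum>l<n. (cmod (x l - c * y l))^2) = (\<Sum>l<n. cnj (x l) * x l) - c * cnj (\<Sum>l<n. cnj (y l) * x l)
     - cnj c * (\<Sum>l<n. cnj (y l) * x l) + complex_of_real ((cmod c)^2) * complex_of_real (\<Sum>l<n. (cmod (y l))^2)"
    by (simp only: of_real_sum e sum.distrib sum_subtractf sum_distrib_left cnj_sum)
  also have "\<dots> = complex_of_real ((\<Sum>l<n. (cmod (x l))^2) + (cmod c)^2 * (\<Sum>l<n. (cmod (y l))^2))"
    using assms by (simp only: of_real_add of_real_mult of_real_sum e2) simp
  finally show ?thesis using of_real_eq_iff by blast
qed

lemma hadamard:
  assumes "C \<in> carrier_mat n m"
  shows "Im (det (mat_adjoint C * C)) = 0 \<and> 0 \<le> Re (det (mat_adjoint C * C)) \<and>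
         Re (det (mat_adjoint C * C)) \<le> (\<Prod>j<m. (vnorm (col C j))^2)"
  using assms
proof (induction m arbitrary: C)
  case 0
  then have "mat_adjoint C * C \<in> carrier_mat 0 0" by auto
  then have "det (mat_adjoint C * C) = 1" by simp
  then show ?case by simp
next
  case (Suc m)
  note C = Suc.prems
  define K where "K = mat_adjoint C * C"
  have K: "K \<in> carrier_mat (Suc m) (Suc m)" unfolding K_def using C by auto
  define s where "s = (vnorm (col C 0))^2"
  have s_sum: "s = (\<Sum>l<n. (cmod (C $$ (l,0)))^2)" unfolding s_def using C by (simp add: vnorm_col_sq)
  have s0: "s \<ge> 0" unfolding s_def by simp
  have "K $$ (0,0) = (\<Sum>l<n. cnj (C $$ (l,0)) * C $$ (l,0))"
    unfolding K_def by (rule gram_index[OF C]) auto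
  also have "\<dots> = complex_of_real s"
    unfolding s_sum of_real_sum by (rule sum.cong[OF refl]) (rule cnorm_sq)
  finally have K00: "K $$ (0,0) = complex_of_real s" .
  have prod_nonneg: "0 \<le> (\<Prod>j<Suc m. (vnorm (col C j))^2)" by (simp add: prod_nonneg)
  show ?case
  proof (cases "s = 0")
    case True
    then have z: "C $$ (l,0) = 0" if "l < n" for l
      using that unfolding s_sum by (subst (asm) sum_nonneg_eq_0_iff) auto
    have "K $$ (0,j) = 0" if "j < Suc m" for j
      unfolding K_def using C that z by (simp add: gram_index row_adj_col)
    then have "det K = 0"
      using laplace_expansion_row[OF K, of 0] by simp
    then show ?thesis using prod_nonneg unfolding K_def by simp
  next
    case False
    with s0 have spos: "s > 0" by simp
    define c where "c j = - K $$ (0,j) / complex_of_real s" for j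
    define E where "E = mat (Suc m) (Suc m) (\<lambda>(i,j). if i = j then 1 else if i = 0 then c j else 0)"
    have E: "E \<in> carrier_mat (Suc m) (Suc m)" unfolding E_def by simp
    define C' where "C' = C * E"
    have C': "C' \<in> carrier_mat n (Suc m)" unfolding C'_def using C E by auto
    have C'_idx: "C' $$ (l,j) = (if j = 0 then C $$ (l,0) else C $$ (l,j) + c j * C $$ (l,0))"
      if "l < n" "j < Suc m" for l j
    proof -
      have "C' $$ (l,j) = (\<Sum>k<Suc m. C $$ (l,k) * E $$ (k,j))"
        unfolding C'_def by (rule mult_index_sum[OF C E that])
      also have "\<dots> = (\<Sum>k<Suc m. (if k = j then C $$ (l,k) else 0) + 
           (if j = 0 then 0 else (if k = 0 then c j * C $$ (l,k) else 0)))"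
        using that unfolding E_def by (intro sum.cong) auto
      also have "\<dots> = (if j = 0 then C $$ (l,0) else C $$ (l,j) + c j * C $$ (l,0))"
        using that by (cases "j = 0") (simp_all add: sum.distrib del: lessThan_Suc)
      finally show ?thesis .
    qed
    have detE: "det E = 1"
    proof -
      have "upper_triangular E" unfolding E_def by auto
      moreover have "diag_mat E = replicate (Suc m) 1"
        by (rule nth_equalityI) (auto simp: diag_mat_def E_def simp del: upt_Suc replicate_Suc)
      ultimately show ?thesis using det_upper_triangular[OF _ E] by simp
    qed
    have detEa: "det (mat_adjoint E) = 1"
    proof -
      have "mat_adjoint E \<in> carrier_mat (Suc m) (Suc m)" using E by auto
      moreover have "diag_mat (mat_adjoint E) = replicate (Suc m) 1"
        using E by (intro nth_equalityI) (auto simp: diag_mat_def E_def simp del: upt_Suc replicate_Suc)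
      moreover have "mat_adjoint E $$ (i,j) = 0" if "i < j" "j < Suc m" for i j
        using that E by (simp add: E_def)
      ultimately show ?thesis using det_lower_triangular[of "Suc m" "mat_adjoint E"] by simp
    qed
    define K' where "K' = mat_adjoint C' * C'"
    have K': "K' \<in> carrier_mat (Suc m) (Suc m)" unfolding K'_def using C' by auto
    have "K' = mat_adjoint E * K * E"
    proof -
      have Ea: "mat_adjoint E \<in> carrier_mat (Suc m) (Suc m)" using E by simp
      have Ca: "mat_adjoint C \<in> carrier_mat (Suc m) n" using C by simp
      have "K' = mat_adjoint E * mat_adjoint C * (C * E)"
        unfolding K'_def C'_def using C E by (simp add: adj_mult)
      also have "\<dots> = mat_adjoint E * (mat_adjoint C * (C * E))"
        using Ea Ca C E by (meson assoc_mult_mat mult_carrier_mat)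
      also have "mat_adjoint C * (C * E) = K * E"
        unfolding K_def using assoc_mult_mat[OF Ca C E] by simp
      also have "mat_adjoint E * (K * E) = mat_adjoint E * K * E"
        using assoc_mult_mat[OF Ea K E] by simp
      finally show ?thesis .
    qed
    then have detK': "det K' = det K"
    proof -
      assume eq: "K' = mat_adjoint E * K * E"
      have Ea: "mat_adjoint E \<in> carrier_mat (Suc m) (Suc m)" using E by simp
      have EK: "mat_adjoint E * K \<in> carrier_mat (Suc m) (Suc m)" using Ea K by simp
      show ?thesis unfolding eq det_mult[OF EK E] det_mult[OF Ea K] detE detEa by simp
    qed
    have K'0: "K' $$ (0,j) = 0" if "0 < j" "j < Suc m" for j
    proof -
      have "K' $$ (0,j) = (\<Sum>l<n. cnj (C $$ (l,0)) * (C $$ (l,j) + c j * C $$ (l,0)))"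
        unfolding K'_def using C' that by (simp add: gram_index row_adj_col C'_idx)
      also have "\<dots> = K $$ (0,j) + c j * K $$ (0,0)"
        unfolding K_def using C that
        by (simp add: gram_index row_adj_col algebra_simps sum.distrib sum_distrib_left)
      also have "\<dots> = 0" unfolding c_def K00 using spos by simp
      finally show ?thesis .
    qed
    have K'00: "K' $$ (0,0) = complex_of_real s"
      unfolding K'_def using C' C by (simp add: gram_index row_adj_col C'_idx K00[unfolded K_def, symmetric])
    have "det K' = (\<Sum>j<Suc m. K' $$ (0,j) * cofactor K' 0 j)"
      using laplace_expansion_row[OF K', of 0] by simp
    also have "\<dots> = K' $$ (0,0) * cofactor K' 0 0"
      by (subst sum.lessThan_Suc_shift) (simp add: K'0)
    finally have dK': "det K' = complex_of_real s * det (mat_delete K' 0 0)"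
      by (simp add: K'00 cofactor_def)
    define C'' where "C'' = mat n m (\<lambda>(l,j). C' $$ (l, Suc j))"
    have C'': "C'' \<in> carrier_mat n m" unfolding C''_def by simp
    have del: "mat_delete K' 0 0 = mat_adjoint C'' * C''"
    proof (rule eq_matI)
      fix i j assume "i < dim_row (mat_adjoint C'' * C'')" "j < dim_col (mat_adjoint C'' * C'')"
      then have i: "i < m" and j: "j < m" using C'' by auto
      have "mat_delete K' 0 0 $$ (i, j) = K' $$ (Suc i, Suc j)"
        using i j K' unfolding mat_delete_def by simp
      also have "\<dots> = (\<Sum>l<n. cnj (C' $$ (l, Suc i)) * C' $$ (l, Suc j))"
        unfolding K'_def by (rule gram_index[OF C']) (use i j in auto)
      also have "\<dots> = (\<Sum>l<n. cnj (C'' $$ (l, i)) * C'' $$ (l, j))"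
        using i j unfolding C''_def by (intro sum.cong) auto
      also have "\<dots> = (mat_adjoint C'' * C'') $$ (i, j)"
        by (rule gram_index[OF C'', symmetric]) (use i j in auto)
      finally show "mat_delete K' 0 0 $$ (i, j) = (mat_adjoint C'' * C'') $$ (i, j)" .
    qed (use K' C'' in auto)
    from Suc.IH[OF C''] have IH: "Im (det (mat_adjoint C'' * C'')) = 0"
      "0 \<le> Re (det (mat_adjoint C'' * C''))"
      "Re (det (mat_adjoint C'' * C'')) \<le> (\<Prod>j<m. (vnorm (col C'' j))^2)" by auto
    have colle: "(vnorm (col C'' j))^2 \<le> (vnorm (col C (Suc j)))^2" if j: "j < m" for j
    proof -
      have orth: "(\<Sum>l<n. cnj (C $$ (l,0)) * C' $$ (l, Suc j)) = 0"
      proof -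
        have "(\<Sum>l<n. cnj (C $$ (l,0)) * C' $$ (l, Suc j)) = (\<Sum>l<n. cnj (C' $$ (l,0)) * C' $$ (l, Suc j))"
          by (intro sum.cong) (simp_all add: C'_idx)
        also have "\<dots> = K' $$ (0, Suc j)"
          unfolding K'_def by (rule gram_index[OF C', symmetric]) (use j in auto)
        finally show ?thesis using K'0[of "Suc j"] j by simp
      qed
      have eq: "C $$ (l, Suc j) = C' $$ (l, Suc j) - c (Suc j) * C $$ (l,0)" if "l < n" for l
        using that j by (simp add: C'_idx)
      have "(vnorm (col C (Suc j)))^2 = (\<Sum>l<n. (cmod (C' $$ (l, Suc j) - c (Suc j) * C $$ (l,0)))^2)"
        using C j eq by (simp add: vnorm_col_sq)
      also have "\<dots> = (\<Sum>l<n. (cmod (C' $$ (l, Suc j)))^2) + (cmod (c (Suc j)))^2 * (\<Sum>l<n. (cmod (C $$ (l,0)))^2)"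
        by (rule pythag[OF orth])
      also have "\<dots> \<ge> (\<Sum>l<n. (cmod (C' $$ (l, Suc j)))^2)"
        by (simp add: sum_nonneg)
      also have "(\<Sum>l<n. (cmod (C' $$ (l, Suc j)))^2) = (vnorm (col C'' j))^2"
        using C'' j by (simp add: vnorm_sq C''_def)
      finally show ?thesis .
    qed
    have detK: "det K = complex_of_real s * det (mat_adjoint C'' * C'')"
      using detK' dK' del by simp
    have "Re (det K) = s * Re (det (mat_adjoint C'' * C''))" using detK by simp
    also have "\<dots> \<le> s * (\<Prod>j<m. (vnorm (col C'' j))^2)"
      using IH(3) s0 by (simp add: mult_left_mono)
    also have "\<dots> \<le> s * (\<Prod>j<m. (vnorm (col C (Suc j)))^2)"
      using s0 colle by (intro mult_left_mono prod_mono) auto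
    also have "\<dots> = (\<Prod>j<Suc m. (vnorm (col C j))^2)"
      unfolding s_def by (simp only: prod.lessThan_Suc_shift)
    finally have up: "Re (det K) \<le> (\<Prod>j<Suc m. (vnorm (col C j))^2)" .
    have "Im (det K) = 0" using detK IH by simp
    moreover have "0 \<le> Re (det K)" using detK IH s0 by simp
    ultimately show ?thesis using up unfolding K_def by simp
  qed
qed

lemma mat_inv_ex: assumes A: "A \<in> carrier_mat n n" and d: "det A \<noteq> 0"
  shows "mat_inv A \<in> carrier_mat n n \<and> A * mat_inv A = 1\<^sub>m n \<and> mat_inv A * A = 1\<^sub>m n"
proof -
  define W where "W = (1 / det A) \<cdot>\<^sub>m adj_mat A"
  have adjA: "adj_mat A \<in> carrier_mat n n" by (rule adj_mat(1)[OF A])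
  have W: "W \<in> carrier_mat n n" unfolding W_def using adjA by simp
  have "A * W = (1 / det A) \<cdot>\<^sub>m (det A \<cdot>\<^sub>m 1\<^sub>m n)"
    unfolding W_def mult_smult_distrib[OF A adjA] adj_mat(2)[OF A] ..
  also have "\<dots> = 1\<^sub>m n" by (rule eq_matI) (use d in auto)
  finally have AW: "A * W = 1\<^sub>m n" .
  have "W * A = (1 / det A) \<cdot>\<^sub>m (det A \<cdot>\<^sub>m 1\<^sub>m n)"
    unfolding W_def mult_smult_assoc_mat[OF adjA A] adj_mat(3)[OF A] ..
  also have "\<dots> = 1\<^sub>m n" by (rule eq_matI) (use d in auto)
  finally have WA: "W * A = 1\<^sub>m n" .
  have ex: "\<exists>B. B \<in> carrier_mat (dim_row A) (dim_row A) \<and> inverts_mat A B \<and> inverts_mat B A"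
    using W AW WA A unfolding inverts_mat_def by (intro exI[of _ W]) auto
  from someI_ex[OF ex] have "mat_inv A \<in> carrier_mat n n \<and> inverts_mat A (mat_inv A) \<and> inverts_mat (mat_inv A) A"
    unfolding mat_inv_def using A by auto
  then show ?thesis unfolding inverts_mat_def using A by auto
qed

lemma right_inv_det: assumes A: "A \<in> carrier_mat n n" and B: "B \<in> carrier_mat n n"
  and AB: "A * B = 1\<^sub>m n" shows "det A \<noteq> 0"
  using det_mult[OF A B] AB by auto

lemma mat_inv_unique: assumes A: "A \<in> carrier_mat n n" and B: "B \<in> carrier_mat n n"
  and AB: "A * B = 1\<^sub>m n" shows "mat_inv A = B"
proof -
  have d: "det A \<noteq> 0" by (rule right_inv_det[OF A B AB])
  note inv = mat_inv_ex[OF A d]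
  have Ai: "mat_inv A \<in> carrier_mat n n" using inv by auto
  have "mat_inv A = mat_inv A * (A * B)" using AB Ai by simp
  also have "\<dots> = (mat_inv A * A) * B" using assoc_mult_mat[OF Ai A B] by simp
  also have "\<dots> = B" using inv B by simp
  finally show ?thesis .
qed

lemma herm_inv: assumes A: "(A :: complex mat) \<in> carrier_mat n n" and h: "mat_adjoint A = A" and d: "det A \<noteq> 0"
  shows "mat_adjoint (mat_inv A) = mat_inv A"
proof -
  note inv = mat_inv_ex[OF A d]
  have Ai: "mat_inv A \<in> carrier_mat n n" using inv by auto
  have "A * mat_adjoint (mat_inv A) = mat_adjoint (mat_inv A * A)"
    using adj_mult[OF Ai A] h by simp
  also have "\<dots> = 1\<^sub>m n" using inv by simp
  finally have "mat_inv A = mat_adjoint (mat_inv A)"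
    by (intro mat_inv_unique[OF A]) (use Ai in auto)
  then show ?thesis by simp
qed

lemma gauss_add: "gauss_int a \<Longrightarrow> gauss_int b \<Longrightarrow> gauss_int (a + b)"
  unfolding gauss_int_def by auto
lemma gauss_mult: "gauss_int a \<Longrightarrow> gauss_int b \<Longrightarrow> gauss_int (a * b)"
  unfolding gauss_int_def by auto
lemma gauss_cnj: "gauss_int a \<Longrightarrow> gauss_int (cnj a)"
  unfolding gauss_int_def by auto
lemma gauss_sum: "(\<And>i. i \<in> S \<Longrightarrow> gauss_int (f i)) \<Longrightarrow> gauss_int (sum f S)"
  unfolding gauss_int_def by (auto simp: Re_sum Im_sum intro: Ints_sum)

lemma round_gauss_near: assumes "gauss_int g" "\<bar>Re e\<bar> < 1/2" "\<bar>Im e\<bar> < 1/2"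
  shows "round_gauss (g + e) = g"
proof -
  obtain a where a: "Re g = of_int a" using assms(1) unfolding gauss_int_def by (auto elim: Ints_cases)
  obtain b where b: "Im g = of_int b" using assms(1) unfolding gauss_int_def by (auto elim: Ints_cases)
  have "round (Re g + Re e) = a" using a assms(2) by (intro round_unique) auto
  moreover have "round (Im g + Im e) = b" using b assms(3) by (intro round_unique) auto
  ultimately show ?thesis unfolding round_gauss_def using a b by (simp add: complex_eq_iff)
qed

lemma cs_ineq: "cmod (\<Sum>l<n. cnj (b l) * w l) \<le> sqrt (\<Sum>l<n. (cmod (b l))^2) * sqrt (\<Sum>l<n. (cmod (w l))^2)"
proof -
  have "cmod (\<Sum>l<n. cnj (b l) * w l) \<le> (\<Sum>l<n. cmod (cnj (b l) * w l))" by (rule norm_sum)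
  also have "\<dots> = (\<Sum>l<n. \<bar>cmod (b l)\<bar> * \<bar>cmod (w l)\<bar>)" by (simp add: norm_mult)
  also have "\<dots> \<le> L2_set (\<lambda>l. cmod (b l)) {..<n} * L2_set (\<lambda>l. cmod (w l)) {..<n}"
    by (rule L2_set_mult_ineq)
  finally show ?thesis unfolding L2_set_def .
qed

lemma gram_diag: assumes C: "C \<in> carrier_mat n m" and k: "k < m"
  shows "(mat_adjoint C * C) $$ (k,k) = complex_of_real ((vnorm (col C k))^2)"
proof -
  have "(mat_adjoint C * C) $$ (k,k) = (\<Sum>l<n. cnj (C $$ (l,k)) * C $$ (l,k))"
    by (rule gram_index[OF C k k])
  also have "\<dots> = complex_of_real (\<Sum>l<n. (cmod (C $$ (l,k)))^2)"
    unfolding of_real_sum by (rule sum.cong[OF refl]) (rule cnorm_sq)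
  finally show ?thesis using vnorm_col_sq[OF C k] by simp
qed

lemma rank_det:
  assumes H: "(H :: complex mat) \<in> carrier_mat N M" and r: "vec_space.rank N H = M"
  shows "det (mat_adjoint H * H) \<noteq> 0"
proof
  assume d0: "det (mat_adjoint H * H) = 0"
  have G: "mat_adjoint H * H \<in> carrier_mat M M" by (rule mult_carrier_mat[OF adj_carrier[OF H] H])
  obtain v where v: "v \<in> carrier_vec M" "v \<noteq> 0\<^sub>v M" "(mat_adjoint H * H) *\<^sub>v v = 0\<^sub>v M"
    using det_0_iff_vec_prod_zero_field[OF G] d0 by blast
  define u where "u = H *\<^sub>v v"
  have u: "u \<in> carrier_vec N" unfolding u_def using H v by simp
  have Hu: "mat_adjoint H *\<^sub>v u = 0\<^sub>v M"
    using v(3) assoc_mult_mat_vec[OF adj_carrier[OF H] H v(1)] unfolding u_def by simp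
  have uidx: "u $ l = (\<Sum>i<M. H $$ (l,i) * v $ i)" if "l < N" for l
    unfolding u_def using that H v(1) by (simp add: scalar_prod_def lessThan_atLeast0)
  have "0 = (\<Sum>i<M. cnj (v $ i) * (mat_adjoint H *\<^sub>v u) $ i)" using Hu by simp
  also have "\<dots> = (\<Sum>i<M. cnj (v $ i) * (\<Sum>l<N. cnj (H $$ (l,i)) * u $ l))"
    using H u by (intro sum.cong) (auto simp: scalar_prod_def lessThan_atLeast0)
  also have "\<dots> = (\<Sum>l<N. (\<Sum>i<M. cnj (H $$ (l,i) * v $ i)) * u $ l)"
    by (simp add: sum_distrib_left sum_distrib_right algebra_simps) (rule sum.swap)
  also have "\<dots> = (\<Sum>l<N. cnj (u $ l) * u $ l)"
    using uidx by (intro sum.cong) (auto simp: cnj_sum)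
  also have "\<dots> = complex_of_real (\<Sum>l<N. (cmod (u $ l))^2)"
    unfolding of_real_sum by (rule sum.cong[OF refl]) (rule cnorm_sq)
  finally have "complex_of_real (\<Sum>l<N. (cmod (u $ l))^2) = 0" by (rule sym)
  then have "(\<Sum>l<N. (cmod (u $ l))^2) = 0" by (simp only: of_real_eq_0_iff)
  then have "u $ l = 0" if "l < N" for l using that by (subst (asm) sum_nonneg_eq_0_iff) auto
  then have Hv: "H *\<^sub>v v = 0\<^sub>v N" using u unfolding u_def[symmetric] by auto
  interpret vec_space "TYPE(complex)" N .
  show False
  proof (cases "distinct (cols H)")
    case True
    have "lin_indpt (set (cols H))" using full_rank_lin_indpt[OF H r True] .
    moreover have "lin_dep (set (cols H))" using lin_depI[OF H v(1) v(2) Hv True] .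
    ultimately show False by simp
  next
    case False
    obtain S where S: "maximal S (\<lambda>T. T \<subseteq> set (cols H) \<and> lin_indpt T)"
      using maximal_exists[of "(\<lambda>T. T \<subseteq> set (cols H) \<and> lin_indpt T)" "card (set (cols H))" "{}"]
      by (meson List.finite_set card_mono empty_iff empty_subsetI finite_lin_indpt2 rev_finite_subset)
    then have "card S \<le> card (set (cols H))" by (simp add: card_mono maximal_def)
    also have "\<dots> < length (cols H)" using False card_distinct card_length le_neq_implies_less by blast
    also have "\<dots> = M" using H by simp
    finally have "card S < M" .
    then show False using rank_card_indpt[OF H S] r by simp
  qed
qed

lemma prod_delete_reindex:
  fixes f :: "nat \<Rightarrow> real"
  assumes k: "k < M"
  shows "(\<Prod>j<M - 1. f (if j < k then j else Suc j)) * f k = (\<Prod>j<M. f j)"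
proof -
  define g where "g j = (if j < k then j else Suc j)" for j
  have inj: "inj_on g {..<M - 1}" unfolding g_def inj_on_def by auto
  have img: "g ` {..<M - 1} = {..<M} - {k}"
  proof
    show "g ` {..<M - 1} \<subseteq> {..<M} - {k}" unfolding g_def using k by auto
    show "{..<M} - {k} \<subseteq> g ` {..<M - 1}"
    proof
      fix x assume x: "x \<in> {..<M} - {k}"
      show "x \<in> g ` {..<M - 1}"
      proof (cases "x < k")
        case True then show ?thesis using x k unfolding g_def by (intro image_eqI[of _ _ x]) auto
      next
        case False then have "x = g (x - 1)" "x - 1 < M - 1" using x unfolding g_def by auto
        then show ?thesis by blast
      qed
    qed
  qed
  have "(\<Prod>j<M. f j) = f k * (\<Prod>j\<in>{..<M} - {k}. f j)"
    using k by (subst prod.remove[of _ k]) auto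
  also have "(\<Prod>j\<in>{..<M} - {k}. f j) = (\<Prod>j<M - 1. f (g j))"
    unfolding img[symmetric] by (rule prod.reindex[OF inj, unfolded comp_def])
  finally show ?thesis unfolding g_def by simp
qed

lemma key_bound:
  assumes B: "(B :: complex mat) \<in> carrier_mat N M" and d: "det (mat_adjoint B * B) \<noteq> 0" and k: "k < M"
  shows "(vnorm (col (pinv_H B) k))^2 * (vnorm (col B k))^2 \<le> orth_defect B"
proof -
  define K where "K = mat_adjoint B * B"
  have Ba: "mat_adjoint B \<in> carrier_mat M N" using B by simp
  have K: "K \<in> carrier_mat M M" unfolding K_def by (rule mult_carrier_mat[OF Ba B])
  have dK: "det K \<noteq> 0" using d unfolding K_def .
  have hK: "mat_adjoint K = K" unfolding K_def using adj_mult[OF Ba B] by simp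
  define Ki where "Ki = mat_inv K"
  note inv = mat_inv_ex[OF K dK, folded Ki_def]
  have Ki: "Ki \<in> carrier_mat M M" using inv by simp
  have hKi: "mat_adjoint Ki = Ki" using herm_inv[OF K hK dK] unfolding Ki_def .
  define A where "A = pinv_H B"
  have A_eq: "A = B * Ki" unfolding A_def pinv_H_def Ki_def K_def ..
  have A: "A \<in> carrier_mat N M" unfolding A_eq using B Ki by simp
  have "mat_adjoint A * A = Ki * mat_adjoint B * (B * Ki)"
    unfolding A_eq adj_mult[OF B Ki] hKi ..
  also have "\<dots> = Ki * (mat_adjoint B * (B * Ki))"
    using assoc_mult_mat[OF Ki Ba mult_carrier_mat[OF B Ki]] .
  also have "mat_adjoint B * (B * Ki) = K * Ki"
    unfolding K_def using assoc_mult_mat[OF Ba B Ki] by simp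
  also have "Ki * (K * Ki) = Ki" using inv Ki by simp
  finally have AA: "mat_adjoint A * A = Ki" .
  have a2: "complex_of_real ((vnorm (col A k))^2) = Ki $$ (k,k)"
    using gram_diag[OF A k] AA by simp
  define W where "W = (1 / det K) \<cdot>\<^sub>m adj_mat K"
  have adjK: "adj_mat K \<in> carrier_mat M M" by (rule adj_mat(1)[OF K])
  have W: "W \<in> carrier_mat M M" unfolding W_def using adjK by simp
  have "K * W = (1 / det K) \<cdot>\<^sub>m (det K \<cdot>\<^sub>m 1\<^sub>m M)"
    unfolding W_def mult_smult_distrib[OF K adjK] adj_mat(2)[OF K] ..
  also have "\<dots> = 1\<^sub>m M" by (rule eq_matI) (use dK in auto)
  finally have "Ki = W" unfolding Ki_def by (rule mat_inv_unique[OF K W])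
  then have "Ki $$ (k,k) = cofactor K k k / det K" unfolding W_def using K k by (simp add: adj_mat_def)
  also have "cofactor K k k = det (mat_delete K k k)"
    unfolding cofactor_def by (simp add: mult_2[symmetric])
  finally have Kikk: "Ki $$ (k,k) = det (mat_delete K k k) / det K" .
  define C where "C = mat N (M - 1) (\<lambda>(l,j). B $$ (l, if j < k then j else Suc j))"
  have C: "C \<in> carrier_mat N (M - 1)" unfolding C_def by simp
  have del: "mat_delete K k k = mat_adjoint C * C"
  proof (rule eq_matI)
    fix i j assume "i < dim_row (mat_adjoint C * C)" "j < dim_col (mat_adjoint C * C)"
    then have i: "i < M - 1" and j: "j < M - 1" using C by auto
    have ii: "(if i < k then i else Suc i) < M" "(if j < k then j else Suc j) < M" using i j k by auto
    have "mat_delete K k k $$ (i, j) = K $$ (if i < k then i else Suc i, if j < k then j else Suc j)"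
      using i j K unfolding mat_delete_def by simp
    also have "\<dots> = (\<Sum>l<N. cnj (B $$ (l, if i < k then i else Suc i)) * B $$ (l, if j < k then j else Suc j))"
      unfolding K_def by (rule gram_index[OF B ii])
    also have "\<dots> = (\<Sum>l<N. cnj (C $$ (l, i)) * C $$ (l, j))"
      using i j unfolding C_def by (intro sum.cong) auto
    also have "\<dots> = (mat_adjoint C * C) $$ (i, j)"
      by (rule gram_index[OF C i j, symmetric])
    finally show "mat_delete K k k $$ (i, j) = (mat_adjoint C * C) $$ (i, j)" .
  qed (use K C in auto)
  note hC = hadamard[OF C]
  note hB = hadamard[OF B]
  define r where "r = Re (det K)"
  define r' where "r' = Re (det (mat_adjoint C * C))"
  have detK: "det K = complex_of_real r" using hB unfolding r_def K_def by (simp add: complex_eq_iff)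
  have rpos: "r > 0" using hB dK detK unfolding r_def K_def by (auto simp: less_le)
  have detC: "det (mat_adjoint C * C) = complex_of_real r'" using hC unfolding r'_def by (simp add: complex_eq_iff)
  have r'b: "r' \<le> (\<Prod>j<M - 1. (vnorm (col C j))^2)" using hC unfolding r'_def by simp
  have a2': "(vnorm (col A k))^2 = r' / r"
    using a2 Kikk del detK detC by (metis of_real_divide of_real_eq_iff)
  have colC: "col C j = col B (if j < k then j else Suc j)" if "j < M - 1" for j
    using that C B unfolding C_def by (intro eq_vecI) auto
  have "(\<Prod>j<M - 1. (vnorm (col C j))^2) = (\<Prod>j<M - 1. (vnorm (col B (if j < k then j else Suc j)))^2)"
    using colC by (intro prod.cong) auto
  then have prodeq: "(\<Prod>j<M - 1. (vnorm (col C j))^2) * (vnorm (col B k))^2 = (\<Prod>j<M. (vnorm (col B j))^2)"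
    using prod_delete_reindex[OF k, of "\<lambda>j. (vnorm (col B j))^2"] by simp
  have "(vnorm (col A k))^2 * (vnorm (col B k))^2 = r' * (vnorm (col B k))^2 / r"
    unfolding a2' by simp
  also have "\<dots> \<le> (\<Prod>j<M - 1. (vnorm (col C j))^2) * (vnorm (col B k))^2 / r"
    using r'b rpos by (intro divide_right_mono mult_right_mono) auto
  also have "\<dots> = orth_defect B"
    unfolding prodeq orth_defect_def r_def K_def using B by simp
  finally show ?thesis unfolding A_def .
qed

theorem lemma2:
  fixes M N :: nat and H U :: "complex mat" and x w :: "complex vec"
  assumes "1 \<le> M" and "M \<le> N"
    and "H \<in> carrier_mat N M"
    and "vec_space.rank N H = M"
    and "unimodular M U"
    and "lll_reduced (pinv_H H * U)"
    and "x \<in> carrier_vec M" and "gauss_vec x"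
    and "w \<in> carrier_vec N"
    and "vnorm w < Min ((\<lambda>k. vnorm (col (pinv_H (pinv_H H * U)) k)) ` {..<M})
                   / (2 * sqrt (real M * orth_defect (pinv_H H * U)))"
  shows "lll_decode (pinv_H H * U) U (H *\<^sub>v x + w) = x"
proof -
  note H = assms(3) and xv = assms(7) and wv = assms(9)
  have Ha: "mat_adjoint H \<in> carrier_mat M N" using H by simp
  define G where "G = mat_adjoint H * H"
  have G: "G \<in> carrier_mat M M" unfolding G_def by (rule mult_carrier_mat[OF Ha H])
  have dG: "det G \<noteq> 0" unfolding G_def by (rule rank_det[OF H assms(4)])
  have hG: "mat_adjoint G = G" unfolding G_def using adj_mult[OF Ha H] by simp
  define Gi where "Gi = mat_inv G"
  note Ginv = mat_inv_ex[OF G dG, folded Gi_def]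
  have Gi: "Gi \<in> carrier_mat M M" using Ginv by simp
  have hGi: "mat_adjoint Gi = Gi" using herm_inv[OF G hG dG] unfolding Gi_def .
  define P where "P = pinv_H H"
  have P_eq: "P = H * Gi" unfolding P_def pinv_H_def Gi_def G_def ..
  have P: "P \<in> carrier_mat N M" unfolding P_eq using H Gi by simp
  have Pa: "mat_adjoint P = Gi * mat_adjoint H" unfolding P_eq adj_mult[OF H Gi] hGi ..
  have Pa_c: "mat_adjoint P \<in> carrier_mat M N" using P by simp
  have PH: "mat_adjoint P * H = 1\<^sub>m M"
    unfolding Pa using assoc_mult_mat[OF Gi Ha H] Ginv unfolding G_def by simp
  obtain V where U: "U \<in> carrier_mat M M" and V: "V \<in> carrier_mat M M" and gU: "gauss_mat U"
    and UV: "U * V = 1\<^sub>m M" and VU: "V * U = 1\<^sub>m M"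
    using assms(5) unfolding unimodular_def inverts_mat_def by auto
  have Ui: "mat_inv U = V" by (rule mat_inv_unique[OF U V UV])
  have Ua: "mat_adjoint U \<in> carrier_mat M M" using U by simp
  define B where "B = P * U"
  have B: "B \<in> carrier_mat N M" unfolding B_def using P U by simp
  have Ba_eq: "mat_adjoint B = mat_adjoint U * mat_adjoint P" unfolding B_def by (rule adj_mult[OF P U])
  have Ba: "mat_adjoint B \<in> carrier_mat M N" using B by simp
  have PP: "mat_adjoint P * P = Gi"
  proof -
    have "mat_adjoint P * P = Gi * mat_adjoint H * (H * Gi)" unfolding Pa by (simp only: P_eq)
    also have "\<dots> = Gi * (mat_adjoint H * (H * Gi))"
      using assoc_mult_mat[OF Gi Ha mult_carrier_mat[OF H Gi]] .
    also have "mat_adjoint H * (H * Gi) = G * Gi" unfolding G_def using assoc_mult_mat[OF Ha H Gi] by simp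
    finally show ?thesis using Ginv Gi by simp
  qed
  have BB: "mat_adjoint B * B = mat_adjoint U * (Gi * U)"
  proof -
    have "mat_adjoint B * B = mat_adjoint U * mat_adjoint P * (P * U)" by (simp only: Ba_eq) (simp only: B_def)
    also have "\<dots> = mat_adjoint U * (mat_adjoint P * (P * U))"
      using assoc_mult_mat[OF Ua Pa_c mult_carrier_mat[OF P U]] .
    also have "mat_adjoint P * (P * U) = Gi * U" using assoc_mult_mat[OF Pa_c P U] PP by simp
    finally show ?thesis .
  qed
  have dUa: "det (mat_adjoint U) \<noteq> 0"
  proof (rule right_inv_det[OF Ua adj_carrier[OF V]])
    show "mat_adjoint U * mat_adjoint V = 1\<^sub>m M" using adj_mult[OF V U] VU by simp
  qed
  have dGi: "det Gi \<noteq> 0" using right_inv_det[OF Gi G] Ginv by simp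
  have dU: "det U \<noteq> 0" by (rule right_inv_det[OF U V UV])
  have dB: "det (mat_adjoint B * B) \<noteq> 0"
    unfolding BB det_mult[OF Ua mult_carrier_mat[OF Gi U]] det_mult[OF Gi U] using dUa dGi dU by simp
  have Hx: "H *\<^sub>v x \<in> carrier_vec N" using H xv by simp
  have eqy: "mat_adjoint B *\<^sub>v (H *\<^sub>v x + w) = mat_adjoint U *\<^sub>v x + mat_adjoint B *\<^sub>v w"
  proof -
    have "mat_adjoint B *\<^sub>v (H *\<^sub>v x + w) = mat_adjoint B *\<^sub>v (H *\<^sub>v x) + mat_adjoint B *\<^sub>v w"
      using mult_add_distrib_mat_vec[OF Ba Hx wv] .
    also have "mat_adjoint B *\<^sub>v (H *\<^sub>v x) = mat_adjoint U *\<^sub>v (mat_adjoint P *\<^sub>v (H *\<^sub>v x))"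
      unfolding Ba_eq using assoc_mult_mat_vec[OF Ua Pa_c Hx] .
    also have "mat_adjoint P *\<^sub>v (H *\<^sub>v x) = x"
      using assoc_mult_mat_vec[OF Pa_c H xv, symmetric] PH xv by simp
    finally show ?thesis .
  qed
  define e where "e = mat_adjoint B *\<^sub>v w"
  have e: "e \<in> carrier_vec M" unfolding e_def using Ba wv by simp
  have Ux: "mat_adjoint U *\<^sub>v x \<in> carrier_vec M" using Ua xv by simp
  have gUx: "gauss_int ((mat_adjoint U *\<^sub>v x) $ k)" if k: "k < M" for k
  proof -
    have "(mat_adjoint U *\<^sub>v x) $ k = (\<Sum>l<M. cnj (U $$ (l,k)) * x $ l)"
      using k U xv by (simp add: scalar_prod_def lessThan_atLeast0)
    also have "gauss_int \<dots>"
      using gU assms(8) k U xv unfolding gauss_mat_def gauss_vec_def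
      by (intro gauss_sum gauss_mult gauss_cnj) auto
    finally show ?thesis .
  qed
  have ebound: "cmod (e $ k) < 1/2" if k: "k < M" for k
  proof -
    have ek: "e $ k = (\<Sum>l<N. cnj (B $$ (l,k)) * w $ l)"
      unfolding e_def using k B wv by (simp add: scalar_prod_def lessThan_atLeast0)
    define b where "b = vnorm (col B k)"
    define a where "a = vnorm (col (pinv_H B) k)"
    define mn where "mn = Min ((\<lambda>k. vnorm (col (pinv_H B) k)) ` {..<M})"
    define dl where "dl = orth_defect B"
    have wn: "vnorm w = sqrt (\<Sum>l<N. (cmod (w $ l))^2)" unfolding vnorm_def using wv by simp
    have bn: "b = sqrt (\<Sum>l<N. (cmod (B $$ (l,k)))^2)" unfolding b_def vnorm_def using B k by simp
    have cs: "cmod (e $ k) \<le> b * vnorm w" unfolding ek bn wn by (rule cs_ineq)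
    have mn_le: "mn \<le> a" unfolding mn_def a_def using k by (intro Min_le) auto
    have mn0: "0 \<le> mn" unfolding mn_def using k assms(1)
      by (subst Min_ge_iff) (auto simp: vnorm_nonneg)
    have b0: "0 \<le> b" unfolding b_def by (rule vnorm_nonneg)
    have a0: "0 \<le> a" unfolding a_def by (rule vnorm_nonneg)
    have w0: "0 \<le> vnorm w" by (rule vnorm_nonneg)
    have kb: "a^2 * b^2 \<le> dl" unfolding a_def b_def dl_def by (rule key_bound[OF B dB k])
    have hw: "vnorm w < mn / (2 * sqrt (real M * dl))"
      using assms(10) unfolding mn_def dl_def B_def P_def .
    have dl0: "0 \<le> dl" using kb by (meson order_trans zero_le_mult_iff zero_le_power2)
    have Md: "dl \<le> real M * dl" using assms(1) dl0 by (simp add: mult_le_cancel_right1)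
    have "b * vnorm w < 1/2"
    proof (cases "real M * dl = 0")
      case True
      then have "mn / (2 * sqrt (real M * dl)) = 0" by simp
      then show ?thesis using hw w0 by linarith
    next
      case False
      then have sq: "sqrt (real M * dl) > 0" using dl0 by simp
      have "mn * b \<le> a * b" using mn_le b0 by (rule mult_right_mono)
      also have "a * b = sqrt (a^2 * b^2)" using a0 b0 by (simp add: real_sqrt_mult)
      also have "\<dots> \<le> sqrt (real M * dl)" using kb Md by simp
      finally have mb: "mn * b \<le> sqrt (real M * dl)" .
      show ?thesis
      proof (cases "b = 0")
        case True then show ?thesis by simp
      next
        case False
        then have bpos: "b > 0" using b0 by simp
        have "b * vnorm w < b * (mn / (2 * sqrt (real M * dl)))"
          using hw bpos by (rule mult_strict_left_mono)
        also have "\<dots> = (mn * b) / (2 * sqrt (real M * dl))" by simp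
        also have "\<dots> \<le> sqrt (real M * dl) / (2 * sqrt (real M * dl))"
          using divide_right_mono[OF mb, of "2 * sqrt (real M * dl)"] sq by linarith
        also have "\<dots> = 1/2"
        proof -
          have "t / (2 * t) = 1/2" if "t > 0" for t :: real using that by simp
          then show ?thesis using sq by blast
        qed
        finally show ?thesis .
      qed
    qed
    then show ?thesis using cs by simp
  qed
  have rnd: "round_vec (mat_adjoint U *\<^sub>v x + e) = mat_adjoint U *\<^sub>v x"
  proof (rule eq_vecI)
    fix k assume "k < dim_vec (mat_adjoint U *\<^sub>v x)"
    then have k: "k < M" using U by simp
    have "round_vec (mat_adjoint U *\<^sub>v x + e) $ k = round_gauss ((mat_adjoint U *\<^sub>v x) $ k + e $ k)"
      unfolding round_vec_def using k Ux e by simp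
    also have "\<dots> = (mat_adjoint U *\<^sub>v x) $ k"
      using gUx[OF k] ebound[OF k] abs_Re_le_cmod[of "e $ k"] abs_Im_le_cmod[of "e $ k"]
      by (intro round_gauss_near) auto
    finally show "round_vec (mat_adjoint U *\<^sub>v x + e) $ k = (mat_adjoint U *\<^sub>v x) $ k" .
  qed (use Ux e U in \<open>auto simp: round_vec_def\<close>)
  have "lll_decode B U (H *\<^sub>v x + w) = mat_adjoint V *\<^sub>v (mat_adjoint U *\<^sub>v x)"
    unfolding lll_decode_def eqy e_def[symmetric] rnd Ui ..
  also have "\<dots> = (mat_adjoint V * mat_adjoint U) *\<^sub>v x"
    using assoc_mult_mat_vec[OF adj_carrier[OF V] Ua xv] by simp
  also have "mat_adjoint V * mat_adjoint U = 1\<^sub>m M" using adj_mult[OF U V] UV by simp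
  finally show ?thesis unfolding B_def P_def using xv by simp
qed

end
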